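(* Let $\mathcal{F}$ be the infinite rooted tree with root $\delta$ in which every vertex has $p\ge2$ children, and let $a$ be an integral weight function on $\mathcal{F}$ with weight $\omega_a$. Then $a(\delta)\ge\widehat\gamma_0(\omega_a)$.
   Context: An integral weight function with weight $\omega$ (nonnegative integer) is a map $a:V(\mathcal{F})\to\mathbb{Z}_{\ge0}$ such that every infinite path $T$ from the root satisfies $\sum_{v\in T}a(v)\ge\omega$, and $a(v)\ge\sum_{u\text{ child of }v}a(u)$ for every vertex $v$. $\widehat\gamma(\omega)$ is the lexicographically smallest sequence $(\gamma_i)_{i\ge0}$ of nonnegative integers with $\gamma_i\ge p\gamma_{i+1}$ and $\sum_i\gamma_i=\omega$. *)

theory Defs
  imports Main
begin

text \<open>The p-ary rooted tree F: vertices are finite words over {0..<p}; the root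
  delta is the empty word; the children of v are v @ [i] for i < p.\<close>

definition tree_vertices :: "nat \<Rightarrow> nat list set" where
  "tree_vertices p = {v. \<forall>x\<in>set v. x < p}"

definition tree_root :: "nat list" where
  "tree_root = []"

definition tree_children :: "nat \<Rightarrow> nat list \<Rightarrow> nat list set" where
  "tree_children p v = {v @ [i] | i. i < p}"

definition inf_path :: "nat \<Rightarrow> (nat \<Rightarrow> nat) \<Rightarrow> bool" where
  "inf_path p f \<longleftrightarrow> (\<forall>n. f n < p)"

definition path_vertex :: "(nat \<Rightarrow> nat) \<Rightarrow> nat \<Rightarrow> nat list" where
  "path_vertex f n = map f [0..<n]"

text \<open>Integral weight function with weight w. Since the values are nonnegative
  integers, the (possibly infinite) sum along a path is at least w iff some
  partial sum is at least w.\<close>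

definition integral_weight_function :: "nat \<Rightarrow> (nat list \<Rightarrow> nat) \<Rightarrow> nat \<Rightarrow> bool" where
  "integral_weight_function p a w \<longleftrightarrow>
     (\<forall>f. inf_path p f \<longrightarrow> (\<exists>N. (\<Sum>n<N. a (path_vertex f n)) \<ge> w)) \<and>
     (\<forall>v\<in>tree_vertices p. a v \<ge> (\<Sum>u\<in>tree_children p v. a u))"

definition gamma_admissible :: "nat \<Rightarrow> nat \<Rightarrow> (nat \<Rightarrow> nat) \<Rightarrow> bool" where
  "gamma_admissible p w g \<longleftrightarrow>
     (\<forall>i. g i \<ge> p * g (Suc i)) \<and> (\<exists>N. (\<forall>i\<ge>N. g i = 0) \<and> (\<Sum>i<N. g i) = w)"

definition lex_less :: "(nat \<Rightarrow> nat) \<Rightarrow> (nat \<Rightarrow> nat) \<Rightarrow> bool" where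
  "lex_less g h \<longleftrightarrow> (\<exists>k. (\<forall>i<k. g i = h i) \<and> g k < h k)"

definition gamma_hat :: "nat \<Rightarrow> nat \<Rightarrow> (nat \<Rightarrow> nat)" where
  "gamma_hat p w = (THE g. gamma_admissible p w g \<and>
      (\<forall>h. gamma_admissible p w h \<longrightarrow> g = h \<or> lex_less g h))"

end

theory Submission
  imports Defs
begin

lemma lex_irrefl: "\<not> lex_less g g"
  unfolding lex_less_def by auto

lemma lex_trans: assumes "lex_less f g" "lex_less g h" shows "lex_less f h"
proof -
  obtain k1 where k1: "\<forall>i<k1. f i = g i" "f k1 < g k1" using assms(1) lex_less_def by auto
  obtain k2 where k2: "\<forall>i<k2. g i = h i" "g k2 < h k2" using assms(2) lex_less_def by auto
  show ?thesis unfolding lex_less_def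
  proof (cases k1 k2 rule: linorder_cases)
    case less thus "\<exists>k. (\<forall>i<k. f i = h i) \<and> f k < h k" using k1 k2 by (intro exI[of _ k1]) auto
  next
    case equal thus "\<exists>k. (\<forall>i<k. f i = h i) \<and> f k < h k" using k1 k2 by (intro exI[of _ k1]) auto
  next
    case greater thus "\<exists>k. (\<forall>i<k. f i = h i) \<and> f k < h k" using k1 k2 by (intro exI[of _ k2]) auto
  qed
qed

lemma lex_total: assumes "g \<noteq> h" shows "lex_less g h \<or> lex_less h g"
proof -
  obtain j where "g j \<noteq> h j" using assms by auto
  define k where "k = (LEAST k. g k \<noteq> h k)"
  have "g k \<noteq> h k" unfolding k_def by (rule LeastI) fact
  moreover have "\<forall>i<k. g i = h i" unfolding k_def using not_less_Least by blast
  ultimately show ?thesis unfolding lex_less_def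
  proof -
    assume a: "g k \<noteq> h k" "\<forall>i<k. g i = h i"
    show "(\<exists>k. (\<forall>i<k. g i = h i) \<and> g k < h k) \<or> (\<exists>k. (\<forall>i<k. h i = g i) \<and> h k < g k)"
    proof (cases "g k < h k")
      case True thus ?thesis using a by blast
    next
      case False hence "h k < g k" using a(1) by simp
      moreover have "\<forall>i<k. h i = g i" using a(2) by simp
      ultimately show ?thesis by blast
    qed
  qed
qed

lemma lex_min_exists: "finite S \<Longrightarrow> S \<noteq> {} \<Longrightarrow> \<exists>g\<in>S. \<forall>h\<in>S. g = h \<or> lex_less g h"
proof (induction S rule: finite_ne_induct)
  case (singleton x) thus ?case by auto
next
  case (insert x F)
  then obtain m where m: "m \<in> F" "\<forall>h\<in>F. m = h \<or> lex_less m h" by auto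
  show ?case
  proof (cases "lex_less x m")
    case True
    have "\<forall>h\<in>insert x F. x = h \<or> lex_less x h"
    proof
      fix h assume "h \<in> insert x F"
      then consider "h = x" | "h \<in> F" by blast
      thus "x = h \<or> lex_less x h"
      proof cases
        case 2 hence "m = h \<or> lex_less m h" using m by blast
        thus ?thesis using True lex_trans[of x m h] by auto
      qed simp
    qed
    thus ?thesis by blast
  next
    case False
    hence "x = m \<or> lex_less m x" using lex_total by blast
    thus ?thesis using m by blast
  qed
qed

lemma adm_bound:
  assumes "p \<ge> 1" "gamma_admissible p w g"
  shows "g i \<le> w \<and> (i \<ge> w \<longrightarrow> g i = 0)"
proof -
  obtain N where N: "\<forall>i\<ge>N. g i = 0" "(\<Sum>i<N. g i) = w" and dec: "\<forall>i. g i \<ge> p * g (Suc i)"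
    using assms(2) unfolding gamma_admissible_def by auto
  have dec1: "\<And>n. g (Suc n) \<le> g n"
  proof -
    fix n have "1 * g (Suc n) \<le> p * g (Suc n)" using assms(1) by (rule mult_le_mono1)
    thus "g (Suc n) \<le> g n" using dec[rule_format, of n] by linarith
  qed
  define M where "M = max N (Suc i)"
  have sumM: "(\<Sum>j<M. g j) = w"
  proof -
    have "(\<Sum>j<M. g j) = (\<Sum>j<N. g j)"
      by (rule sum.mono_neutral_right) (use N(1) in \<open>auto simp: M_def\<close>)
    thus ?thesis using N(2) by simp
  qed
  have le: "(\<Sum>j<Suc i. g j) \<le> w"
    using sumM sum_mono2[of "{..<M}" "{..<Suc i}" g] unfolding M_def by auto
  have "g i \<le> (\<Sum>j<Suc i. g j)" by (rule member_le_sum) auto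
  hence A: "g i \<le> w" using le by simp
  have B: "g i = 0" if "i \<ge> w"
  proof (rule ccontr)
    assume "g i \<noteq> 0"
    have "\<forall>j<Suc i. 1 \<le> g j"
    proof (intro allI impI)
      fix j assume "j < Suc i"
      hence "g i \<le> g j" using lift_Suc_antimono_le[of g, OF dec1, of j i] by simp
      thus "1 \<le> g j" using \<open>g i \<noteq> 0\<close> by simp
    qed
    hence "(\<Sum>j<Suc i. (1::nat)) \<le> (\<Sum>j<Suc i. g j)" by (intro sum_mono) auto
    thus False using le that by simp
  qed
  show ?thesis using A B by auto
qed

lemma adm_finite:
  assumes "p \<ge> 1" shows "finite {g. gamma_admissible p w g}"
proof -
  have "{g. gamma_admissible p w g} \<subseteq> (\<lambda>xs i. if i < w then xs ! i else 0) ` {xs. set xs \<subseteq> {..w} \<and> length xs = w}"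
  proof
    fix g assume "g \<in> {g. gamma_admissible p w g}"
    hence b: "\<And>i. g i \<le> w \<and> (i \<ge> w \<longrightarrow> g i = 0)" using adm_bound[OF assms] by blast
    have "g = (\<lambda>i. if i < w then map g [0..<w] ! i else 0)"
    proof
      fix i show "g i = (if i < w then map g [0..<w] ! i else 0)"
        using b[of i] by (cases "i < w") simp_all
    qed
    moreover have "map g [0..<w] \<in> {xs. set xs \<subseteq> {..w} \<and> length xs = w}"
    proof -
      have "set (map g [0..<w]) \<subseteq> {..w}"
      proof
        fix x assume "x \<in> set (map g [0..<w])"
        then obtain i where "x = g i" by auto
        thus "x \<in> {..w}" using b[of i] by simp
      qed
      thus ?thesis by simp
    qed
    ultimately show "g \<in> (\<lambda>xs i. if i < w then xs ! i else 0) ` {xs. set xs \<subseteq> {..w} \<and> length xs = w}"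
      by (rule image_eqI)
  qed
  moreover have "finite {xs. set xs \<subseteq> {..w} \<and> length xs = w}"
    by (rule finite_lists_length_eq) simp
  ultimately show ?thesis by (rule finite_subset[OF _ finite_imageI])
qed

lemma gamma_hat_prop:
  assumes "p \<ge> 1"
  shows "gamma_admissible p w (gamma_hat p w) \<and>
      (\<forall>h. gamma_admissible p w h \<longrightarrow> gamma_hat p w = h \<or> lex_less (gamma_hat p w) h)"
proof -
  have ne: "{g. gamma_admissible p w g} \<noteq> {}"
  proof -
    have "gamma_admissible p w (\<lambda>i. if i = 0 then w else 0)"
      unfolding gamma_admissible_def by (auto intro!: exI[of _ 1])
    thus ?thesis by blast
  qed
  obtain g where g: "gamma_admissible p w g" "\<forall>h. gamma_admissible p w h \<longrightarrow> g = h \<or> lex_less g h"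
    using lex_min_exists[OF adm_finite[OF assms] ne] by auto
  have "\<exists>!g. gamma_admissible p w g \<and> (\<forall>h. gamma_admissible p w h \<longrightarrow> g = h \<or> lex_less g h)"
  proof (rule ex1I[of _ g])
    show "gamma_admissible p w g \<and> (\<forall>h. gamma_admissible p w h \<longrightarrow> g = h \<or> lex_less g h)" using g by auto
  next
    fix g' assume "gamma_admissible p w g' \<and> (\<forall>h. gamma_admissible p w h \<longrightarrow> g' = h \<or> lex_less g' h)"
    hence "g' = g \<or> lex_less g' g" "g = g' \<or> lex_less g g'" using g by auto
    thus "g' = g" using lex_trans[of g' g g'] lex_irrefl[of g'] by blast
  qed
  thus ?thesis unfolding gamma_hat_def by (rule theI')
qed

lemma truncate_adm:
  assumes "gamma_admissible p S g" "w \<le> S"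
  shows "\<exists>h. gamma_admissible p w h \<and> h 0 \<le> g 0"
proof -
  obtain N where N: "\<forall>i\<ge>N. g i = 0" "(\<Sum>i<N. g i) = S" and dec: "\<forall>i. g i \<ge> p * g (Suc i)"
    using assms(1) unfolding gamma_admissible_def by auto
  define h where "h i = min (g i) (w - (\<Sum>j<i. g j))" for i
  have sumh: "(\<Sum>i<n. h i) = min w (\<Sum>i<n. g i)" for n
  proof (induction n)
    case 0 thus ?case by simp
  next
    case (Suc n) thus ?case unfolding h_def by simp
  qed
  have "h i \<ge> p * h (Suc i)" for i
  proof (cases "h (Suc i) = 0")
    case True thus ?thesis by simp
  next
    case False
    hence "w > (\<Sum>j<Suc i. g j)" unfolding h_def by simp
    hence "h i = g i" unfolding h_def by simp
    moreover have "h (Suc i) \<le> g (Suc i)" unfolding h_def by simp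
    ultimately show ?thesis using dec[rule_format, of i] by (metis le_trans mult_le_mono2)
  qed
  moreover have "\<forall>i\<ge>N. h i = 0" using N(1) unfolding h_def by simp
  moreover have "(\<Sum>i<N. h i) = w" using sumh[of N] N(2) assms(2) by simp
  ultimately have "gamma_admissible p w h" unfolding gamma_admissible_def by blast
  moreover have "h 0 \<le> g 0" unfolding h_def by simp
  ultimately show ?thesis by blast
qed


definition cmin :: "(nat list \<Rightarrow> nat) \<Rightarrow> nat \<Rightarrow> nat list \<Rightarrow> nat" where
  "cmin a p v = (SOME i. i < p \<and> (\<forall>j<p. a (v @ [i]) \<le> a (v @ [j])))"

lemma cmin_prop:
  assumes "p \<ge> 1" "a v \<ge> (\<Sum>u\<in>tree_children p v. a u)"
  shows "cmin a p v < p \<and> p * a (v @ [cmin a p v]) \<le> a v"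
proof -
  have "\<exists>i. i < p \<and> (\<forall>j. j < p \<longrightarrow> a (v @ [i]) \<le> a (v @ [j]))"
    using ex_has_least_nat[of "\<lambda>i. i < p" 0 "\<lambda>i. a (v @ [i])"] assms(1) by simp
  hence c: "cmin a p v < p \<and> (\<forall>j<p. a (v @ [cmin a p v]) \<le> a (v @ [j]))"
    unfolding cmin_def by (rule someI_ex) 
  have tc: "tree_children p v = (\<lambda>i. v @ [i]) ` {..<p}" unfolding tree_children_def by auto
  have "(\<Sum>u\<in>tree_children p v. a u) = (\<Sum>i<p. a (v @ [i]))"
    unfolding tc by (subst sum.reindex) (auto simp: inj_on_def)
  moreover have "(\<Sum>i<p. a (v @ [cmin a p v])) \<le> (\<Sum>i<p. a (v @ [i]))"
    using c by (intro sum_mono) auto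
  ultimately show ?thesis using c assms(2) by simp
qed

primrec pvtx :: "(nat list \<Rightarrow> nat) \<Rightarrow> nat \<Rightarrow> nat \<Rightarrow> nat list" where
  "pvtx a p 0 = []"
| "pvtx a p (Suc n) = pvtx a p n @ [cmin a p (pvtx a p n)]"

theorem mainTheorem10:
  fixes p w :: nat and a :: "nat list \<Rightarrow> nat"
  assumes "p \<ge> 2"
    and "integral_weight_function p a w"
  shows "a tree_root \<ge> gamma_hat p w 0"
proof -
  have p1: "p \<ge> 1" using assms(1) by simp
  have iw1: "\<forall>f. inf_path p f \<longrightarrow> (\<exists>N. (\<Sum>n<N. a (path_vertex f n)) \<ge> w)"
    and iw2: "\<forall>v\<in>tree_vertices p. a v \<ge> (\<Sum>u\<in>tree_children p v. a u)"
    using assms(2) unfolding integral_weight_function_def by auto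
  define f where "f n = cmin a p (pvtx a p n)" for n
  have tv: "pvtx a p n \<in> tree_vertices p \<and> f n < p" for n
  proof (induction n)
    case 0
    have "[] \<in> tree_vertices p" unfolding tree_vertices_def by simp
    thus ?case using cmin_prop[OF p1, of a "[]"] iw2 unfolding f_def by simp
  next
    case (Suc n)
    hence "pvtx a p (Suc n) \<in> tree_vertices p" unfolding tree_vertices_def f_def by auto
    thus ?case using cmin_prop[OF p1, of a "pvtx a p (Suc n)"] iw2 unfolding f_def by simp
  qed
  have pv: "path_vertex f n = pvtx a p n" for n
    by (induction n) (simp_all add: path_vertex_def f_def)
  have decr: "p * a (pvtx a p (Suc n)) \<le> a (pvtx a p n)" for n
    using cmin_prop[OF p1, of a "pvtx a p n"] iw2 tv[of n] by simp
  have "inf_path p f" unfolding inf_path_def using tv by blast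
  then obtain N where NS: "(\<Sum>n<N. a (pvtx a p n)) \<ge> w" using iw1 pv by auto
  define g where "g n = (if n < N then a (pvtx a p n) else 0)" for n
  have "gamma_admissible p (\<Sum>n<N. a (pvtx a p n)) g"
  proof -
    have "\<forall>i. p * g (Suc i) \<le> g i" unfolding g_def using decr by simp
    moreover have "\<forall>i\<ge>N. g i = 0" unfolding g_def by simp
    moreover have "(\<Sum>i<N. g i) = (\<Sum>n<N. a (pvtx a p n))" unfolding g_def by simp
    ultimately show ?thesis unfolding gamma_admissible_def by blast
  qed
  then obtain h where h: "gamma_admissible p w h" "h 0 \<le> g 0"
    using truncate_adm NS by blast
  have "g 0 \<le> a tree_root" unfolding g_def tree_root_def by simp
  moreover have "gamma_hat p w 0 \<le> h 0"
  proof -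
    have "gamma_hat p w = h \<or> lex_less (gamma_hat p w) h" using gamma_hat_prop[OF p1] h(1) by blast
    thus ?thesis
    proof
      assume "lex_less (gamma_hat p w) h"
      then obtain k where k: "\<forall>i<k. gamma_hat p w i = h i" "gamma_hat p w k < h k"
        unfolding lex_less_def by blast
      show ?thesis using k by (cases k) auto
    qed simp
  qed
  ultimately show ?thesis using h(2) by simp
qed

end
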